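(* Let $\Gamma\leq Tr_1(n,\mathbb{Z})$ be a finitely generated torsion-free nilpotent group, $p$ a prime, $L$ the $\mathbb{Q}$-span of $\log(\Gamma)$ and $L_p$ the $\mathbb{Q}$-span of $\log(\Gamma_p)$, where $\Gamma_p$ is the closure of $\Gamma$ in $Tr_1(n,\mathbb{Z}_p)$. Then $\dim_{\mathbb{Q}}(L)=\dim_{\mathbb{Q}_{p}}(L_{p})$.
   Context: $Tr_1(n,K)$ denotes upper unitriangular matrices and $Tr_0(n,K)$ strictly upper triangular matrices; $\log:Tr_1(n,\mathbb{Q}_p)\to Tr_0(n,\mathbb{Q}_p)$ is the (finite) logarithm series. $L$ is a $\mathbb{Q}$-Lie algebra and $L_p$ is a $\mathbb{Q}_p$-Lie algebra (under the commutator bracket). *)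

theory Defs
  imports Complex_Main "HOL-Computational_Algebra.Primes"
begin

section \<open>Square matrices of size n, as entry functions (zero outside the n x n block)\<close>

type_synonym 'a sqm = "nat \<Rightarrow> nat \<Rightarrow> 'a"

definition idm :: "nat \<Rightarrow> 'a::{zero,one} sqm" where
  "idm n = (\<lambda>i j. if i = j \<and> i < n then 1 else 0)"

definition mmul :: "nat \<Rightarrow> 'a::comm_semiring_1 sqm \<Rightarrow> 'a sqm \<Rightarrow> 'a sqm" where
  "mmul n A B = (\<lambda>i j. if i < n \<and> j < n then (\<Sum>k<n. A i k * B k j) else 0)"

definition mpow :: "nat \<Rightarrow> 'a::comm_semiring_1 sqm \<Rightarrow> nat \<Rightarrow> 'a sqm" where
  "mpow n A k = ((mmul n A) ^^ k) (idm n)"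

definition unitri :: "nat \<Rightarrow> 'a::{zero,one} sqm \<Rightarrow> bool" where
  "unitri n M \<longleftrightarrow> (\<forall>i j. (\<not> (i < n \<and> j < n) \<longrightarrow> M i j = 0)
                       \<and> (i < n \<and> j < n \<and> j < i \<longrightarrow> M i j = 0)
                       \<and> (i < n \<and> i = j \<longrightarrow> M i j = 1))"

text \<open>The (finite) logarithm series log(M) = sum_{k>=1} (-1)^(k+1) (M - 1)^k / k,
  which terminates for unitriangular M since (M-1)^n = 0.\<close>
definition mlog :: "nat \<Rightarrow> 'a::field_char_0 sqm \<Rightarrow> 'a sqm" where
  "mlog n M = (\<lambda>i j. \<Sum>k\<in>{1..n}. ((-1) ^ (k + 1) / of_nat k) * mpow n (\<lambda>a b. M a b - idm n a b) k i j)"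

definition subgroup_Tr1Z :: "nat \<Rightarrow> int sqm set \<Rightarrow> bool" where
  "subgroup_Tr1Z n H \<longleftrightarrow> H \<subseteq> {M. unitri n M} \<and> idm n \<in> H
     \<and> (\<forall>g\<in>H. \<forall>h\<in>H. mmul n g h \<in> H)
     \<and> (\<forall>g\<in>H. \<exists>h\<in>H. mmul n g h = idm n)"

definition fin_gen_Tr1Z :: "nat \<Rightarrow> int sqm set \<Rightarrow> bool" where
  "fin_gen_Tr1Z n G \<longleftrightarrow> (\<exists>S. finite S \<and> S \<subseteq> G
      \<and> (\<forall>H. subgroup_Tr1Z n H \<and> S \<subseteq> H \<longrightarrow> G \<subseteq> H))"

definition torsion_free_Tr1Z :: "nat \<Rightarrow> int sqm set \<Rightarrow> bool" where
  "torsion_free_Tr1Z n G \<longleftrightarrow> (\<forall>g\<in>G. \<forall>k>0. mpow n g k = idm n \<longrightarrow> g = idm n)"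

definition commutators :: "nat \<Rightarrow> int sqm set \<Rightarrow> int sqm set \<Rightarrow> int sqm set" where
  "commutators n G H = {mmul n g (mmul n h (mmul n g' h')) | g h g' h'.
      g \<in> G \<and> h \<in> H \<and> unitri n g' \<and> unitri n h' \<and>
      mmul n g g' = idm n \<and> mmul n h h' = idm n}"

primrec lcs :: "nat \<Rightarrow> int sqm set \<Rightarrow> nat \<Rightarrow> int sqm set" where
  "lcs n G 0 = G"
| "lcs n G (Suc k) = \<Inter>{H. subgroup_Tr1Z n H \<and> commutators n G (lcs n G k) \<subseteq> H}"

definition nilpotent_Tr1Z :: "nat \<Rightarrow> int sqm set \<Rightarrow> bool" where
  "nilpotent_Tr1Z n G \<longleftrightarrow> (\<exists>k. lcs n G k = {idm n})"

definition span_over :: "'a::field set \<Rightarrow> 'a sqm set \<Rightarrow> 'a sqm set" where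
  "span_over R S = {(\<lambda>i j. \<Sum>v\<in>F. c v * v i j) | F c.
      finite F \<and> F \<subseteq> S \<and> (\<forall>v\<in>F. c v \<in> R)}"

definition lin_indep :: "'a::field sqm set \<Rightarrow> bool" where
  "lin_indep F \<longleftrightarrow> finite F \<and>
     (\<forall>c. (\<forall>i j. (\<Sum>v\<in>F. c v * v i j) = 0) \<longrightarrow> (\<forall>v\<in>F. c v = 0))"

definition mdim :: "'a::field sqm set \<Rightarrow> nat" where
  "mdim S = Max {card F | F. F \<subseteq> S \<and> lin_indep F}"

text \<open>K with absolute value nv is (a copy of) Q_p: a field of characteristic 0 with a
  non-archimedean absolute value restricting to the p-adic one on Z, complete, and in which
  Q is dense.  Such a field is unique up to isometric isomorphism.\<close>
definition padic_field :: "nat \<Rightarrow> ('k::field_char_0 \<Rightarrow> real) \<Rightarrow> bool" where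
  "padic_field p nv \<longleftrightarrow>
     (\<forall>x. nv x \<ge> 0) \<and> (\<forall>x. nv x = 0 \<longleftrightarrow> x = 0)
   \<and> (\<forall>x y. nv (x * y) = nv x * nv y)
   \<and> (\<forall>x y. nv (x + y) \<le> max (nv x) (nv y))
   \<and> (\<forall>m::int. m \<noteq> 0 \<longrightarrow> nv (of_int m) = (1 / real p) ^ multiplicity (int p) m)
   \<and> (\<forall>X::nat \<Rightarrow> 'k. (\<forall>e>0. \<exists>N. \<forall>a\<ge>N. \<forall>b\<ge>N. nv (X a - X b) < e)
          \<longrightarrow> (\<exists>l. \<forall>e>0. \<exists>N. \<forall>a\<ge>N. nv (X a - l) < e))
   \<and> (\<forall>x. \<forall>e>0. \<exists>q::rat. nv (x - of_rat q) < e)"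

text \<open>Gamma_p: closure of Gamma in Tr_1(n,Z_p), Z_p = {x. nv x <= 1}.\<close>
definition padic_closure :: "nat \<Rightarrow> ('k::field_char_0 \<Rightarrow> real) \<Rightarrow> int sqm set \<Rightarrow> 'k sqm set" where
  "padic_closure n nv G = {M. unitri n M \<and> (\<forall>i j. nv (M i j) \<le> 1) \<and>
      (\<forall>e>0. \<exists>g\<in>G. \<forall>i<n. \<forall>j<n. nv (M i j - of_int (g i j)) < e)}"

end

theory Submission
  imports Defs "HOL-Library.Function_Algebras"
begin

definition msc :: "'a::field \<Rightarrow> 'a sqm \<Rightarrow> 'a sqm" where
  "msc c M = (\<lambda>i j. c * M i j)"

lemma vs_msc: "vector_space (msc :: 'a::field \<Rightarrow> 'a sqm \<Rightarrow> 'a sqm)"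
  by unfold_locales (auto simp: msc_def fun_eq_iff algebra_simps)

interpretation MV: vector_space "msc :: 'a::field \<Rightarrow> 'a sqm \<Rightarrow> 'a sqm"
  by (rule vs_msc)

lemma sum_fun_apply: "(\<Sum>x\<in>A. f x) i = (\<Sum>x\<in>A. f x i)"
  by (induct A rule: infinite_finite_induct) auto

lemma sum_msc_apply: "(\<Sum>v\<in>F. msc (u v) v) = (\<lambda>i j. \<Sum>v\<in>F. u v * v i j)"
  by (auto simp: fun_eq_iff sum_fun_apply msc_def)

lemma sum_msc_apply2: "(\<Sum>v\<in>F. msc (u v) (w v)) = (\<lambda>i j. \<Sum>v\<in>F. u v * w v i j)"
  by (auto simp: fun_eq_iff sum_fun_apply msc_def)

lemma lin_indep_iff: "finite F \<Longrightarrow> lin_indep F \<longleftrightarrow> MV.independent F"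
  unfolding lin_indep_def MV.dependent_finite sum_msc_apply
  by (auto simp: fun_eq_iff)

lemma span_over_UNIV: "span_over UNIV S = MV.span S"
  unfolding span_over_def MV.span_explicit sum_msc_apply by auto

lemma span_over_sub: "span_over R S \<subseteq> MV.span S"
  unfolding span_over_def MV.span_explicit sum_msc_apply by auto

definition Em :: "nat \<Rightarrow> nat \<Rightarrow> 'a::field sqm" where
  "Em a b = (\<lambda>i j. if i = a \<and> j = b then 1 else 0)"

lemma blk_expand:
  fixes X :: "'a::field sqm"
  assumes "\<And>i j. \<not> (i < n \<and> j < n) \<Longrightarrow> X i j = 0"
  shows "X = (\<Sum>p\<in>{..<n}\<times>{..<n}. msc (X (fst p) (snd p)) (Em (fst p) (snd p)))"
proof -
  have "X i j = (\<Sum>p\<in>{..<n}\<times>{..<n}. X (fst p) (snd p) * Em (fst p) (snd p) i j)" for i j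
  proof (cases "i < n \<and> j < n")
    case True
    have "(\<Sum>p\<in>{..<n}\<times>{..<n}. X (fst p) (snd p) * Em (fst p) (snd p) i j)
        = (\<Sum>p\<in>{..<n}\<times>{..<n}. if p = (i,j) then X i j else 0)"
      by (rule sum.cong) (auto simp: Em_def)
    also have "\<dots> = X i j" using True by (simp add: sum.delta')
    finally show ?thesis by simp
  next
    case False
    then show ?thesis using assms by (auto simp: Em_def intro!: sum.neutral)
  qed
  then show ?thesis unfolding sum_msc_apply2 by (intro ext) blast
qed

lemma blk_in_span:
  fixes X :: "'a::field sqm"
  assumes "\<And>i j. \<not> (i < n \<and> j < n) \<Longrightarrow> X i j = 0"
  shows "X \<in> MV.span ((\<lambda>p. Em (fst p) (snd p)) ` ({..<n}\<times>{..<n}))"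
proof -
  have "X = (\<Sum>p\<in>{..<n}\<times>{..<n}. msc (X (fst p) (snd p)) (Em (fst p) (snd p)))"
    by (rule blk_expand) (use assms in auto)
  also have "\<dots> \<in> MV.span ((\<lambda>p. Em (fst p) (snd p)) ` ({..<n}\<times>{..<n}))"
    by (intro MV.span_sum MV.span_scale MV.span_base) auto
  finally show ?thesis .
qed


lemma nv_basic:
  assumes "padic_field p nv"
  shows "nv x \<ge> 0" "nv 0 = 0" "nv (x*y) = nv x * nv y" "nv (x+y) \<le> max (nv x) (nv y)" "nv 1 = 1"
proof -
  show "nv x \<ge> 0" "nv 0 = 0" "nv (x*y) = nv x * nv y" "nv (x+y) \<le> max (nv x) (nv y)"
    using assms unfolding padic_field_def by auto
  have h: "\<forall>m::int. m \<noteq> 0 \<longrightarrow> nv (of_int m) = (1 / real p) ^ multiplicity (int p) m"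
    using assms unfolding padic_field_def by blast
  show "nv 1 = 1" using h[rule_format, of 1] by simp
qed

lemma nv_minus:
  assumes "padic_field p nv"
  shows "nv (-x) = nv x"
proof -
  have "nv (-1) * nv (-1) = 1"
    using nv_basic(3)[OF assms, of "-1" "-1"] nv_basic(5)[OF assms] by simp
  moreover have "nv (-1) \<ge> 0" using nv_basic(1)[OF assms] .
  ultimately have "nv (-1) = 1"
    by (metis abs_of_nonneg abs_power2 power2_eq_square power2_eq_1_iff abs_eq_iff)
  then show ?thesis using nv_basic(3)[OF assms, of "-1" x] by simp
qed

lemma nv_diff:
  assumes "padic_field p nv"
  shows "nv (x - y) \<le> max (nv x) (nv y)"
  using nv_basic(4)[OF assms, of x "-y"] nv_minus[OF assms, of y] by simp

lemma nv_int:
  assumes "padic_field p nv" "prime p"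
  shows "nv (of_int m) \<le> 1"
proof (cases "m = 0")
  case True then show ?thesis using nv_basic(2)[OF assms(1)] by simp
next
  case False
  then have "nv (of_int m) = (1 / real p) ^ multiplicity (int p) m"
    using assms(1) unfolding padic_field_def by blast
  moreover have "real p \<ge> 1" using prime_gt_1_nat[OF assms(2)] by simp
  ultimately show ?thesis by (simp add: power_le_one)
qed

lemma nv_sum_le:
  assumes "padic_field p nv" "\<And>x. x \<in> S \<Longrightarrow> nv (f x) \<le> b" "0 \<le> b"
  shows "nv (sum f S) \<le> b"
  using assms(2)
proof (induct S rule: infinite_finite_induct)
  case (infinite A) then show ?case using nv_basic(2)[OF assms(1)] assms(3) by simp
next
  case empty then show ?case using nv_basic(2)[OF assms(1)] assms(3) by simp
next
  case (insert x F)
  then have "nv (f x) \<le> b" "nv (sum f F) \<le> b" by auto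
  then have m: "max (nv (f x)) (nv (sum f F)) \<le> b" by simp
  have "nv (f x + sum f F) \<le> max (nv (f x)) (nv (sum f F))" by (rule nv_basic(4)[OF assms(1)])
  then have "nv (f x + sum f F) \<le> b" using m by (rule order_trans)
  then show ?case using insert(1,2) by simp
qed

lemma nv_idm:
  assumes "padic_field p nv"
  shows "nv (idm n i j) \<le> 1"
  using nv_basic(2,5)[OF assms] by (auto simp: idm_def)

section \<open>Matrix powers\<close>

lemma mpow_0: "mpow n A 0 = idm n" by (simp add: mpow_def)
lemma mpow_Suc: "mpow n A (Suc k) = mmul n A (mpow n A k)" by (simp add: mpow_def)

lemma mpow_bound:
  assumes pf: "padic_field p nv" and A: "\<And>i j. i < n \<Longrightarrow> j < n \<Longrightarrow> nv (A i j) \<le> 1"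
  shows "nv (mpow n A k i j) \<le> 1"
proof (induct k arbitrary: i j)
  case 0 then show ?case using nv_idm[OF pf] by (simp add: mpow_0)
next
  case (Suc k)
  show ?case
  proof (cases "i < n \<and> j < n")
    case True
    have "nv (\<Sum>l<n. A i l * mpow n A k l j) \<le> 1"
    proof (rule nv_sum_le[OF pf])
      fix l assume "l \<in> {..<n}"
      then have "nv (A i l) \<le> 1" using A True by auto
      moreover have "nv (mpow n A k l j) \<le> 1" using Suc .
      ultimately show "nv (A i l * mpow n A k l j) \<le> 1"
        using nv_basic(1,3)[OF pf] by (simp add: mult_le_one)
    qed simp
    then show ?thesis using True by (simp add: mpow_Suc mmul_def)
  next
    case False then show ?thesis using nv_basic(2)[OF pf] by (auto simp: mpow_Suc mmul_def)
  qed
qed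

lemma mpow_close:
  assumes pf: "padic_field p nv" and A: "\<And>i j. i < n \<Longrightarrow> j < n \<Longrightarrow> nv (A i j) \<le> 1"
    and B: "\<And>i j. i < n \<Longrightarrow> j < n \<Longrightarrow> nv (B i j) \<le> 1"
    and AB: "\<And>i j. i < n \<Longrightarrow> j < n \<Longrightarrow> nv (A i j - B i j) \<le> e" and e: "0 \<le> e"
  shows "nv (mpow n A k i j - mpow n B k i j) \<le> e"
proof (induct k arbitrary: i j)
  case 0 then show ?case using nv_basic(2)[OF pf] e by (simp add: mpow_0)
next
  case (Suc k)
  show ?case
  proof (cases "i < n \<and> j < n")
    case True
    have eq: "(\<Sum>l<n. A i l * mpow n A k l j) - (\<Sum>l<n. B i l * mpow n B k l j)
      = (\<Sum>l<n. A i l * (mpow n A k l j - mpow n B k l j) + (A i l - B i l) * mpow n B k l j)"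
      by (simp add: sum_subtractf[symmetric] algebra_simps)
    have "nv (\<Sum>l<n. A i l * (mpow n A k l j - mpow n B k l j) + (A i l - B i l) * mpow n B k l j) \<le> e"
    proof (rule nv_sum_le[OF pf _ e])
      fix l assume "l \<in> {..<n}"
      then have a: "nv (A i l) \<le> 1" and ab: "nv (A i l - B i l) \<le> e" using A AB True by auto
      have d: "nv (mpow n A k l j - mpow n B k l j) \<le> e" using Suc .
      have b: "nv (mpow n B k l j) \<le> 1" using mpow_bound[OF pf B] .
      have 1: "nv (A i l * (mpow n A k l j - mpow n B k l j)) \<le> e"
        using mult_mono[OF a d] nv_basic(1,3)[OF pf] by simp
      have 2: "nv ((A i l - B i l) * mpow n B k l j) \<le> e"
        using mult_mono[OF ab b] nv_basic(1,3)[OF pf] e by simp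
      show "nv (A i l * (mpow n A k l j - mpow n B k l j) + (A i l - B i l) * mpow n B k l j) \<le> e"
        using nv_basic(4)[OF pf] 1 2 by (meson max.boundedI order_trans)
    qed
    then show ?thesis using True eq by (simp add: mpow_Suc mmul_def)
  next
    case False then show ?thesis using nv_basic(2)[OF pf] e by (auto simp: mpow_Suc mmul_def)
  qed
qed

lemma mlog_blk: "\<not> (i < n \<and> j < n) \<Longrightarrow> mlog n M i j = 0"
proof -
  assume h: "\<not> (i < n \<and> j < n)"
  have "mpow n A k i j = 0" if kin: "k \<in> {1..n}" for A :: "'a::field_char_0 sqm" and k
  proof -
    obtain k' where "k = Suc k'" using kin by (cases k) auto
    then show ?thesis using h by (auto simp: mpow_Suc mmul_def)
  qed
  then show ?thesis by (simp add: mlog_def)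
qed

section \<open>Rational embedding\<close>

definition rmap :: "rat sqm \<Rightarrow> 'k::field_char_0 sqm" where
  "rmap X = (\<lambda>i j. of_rat (X i j))"

lemma rmap_mmul: "rmap (mmul n A B) = (mmul n (rmap A) (rmap B) :: 'k::field_char_0 sqm)"
  by (auto simp: fun_eq_iff rmap_def mmul_def of_rat_sum of_rat_mult)

lemma rmap_idm: "rmap (idm n) = (idm n :: 'k::field_char_0 sqm)"
  by (auto simp: fun_eq_iff rmap_def idm_def)

lemma rmap_mpow: "rmap (mpow n A k) = (mpow n (rmap A) k :: 'k::field_char_0 sqm)"
  by (induct k) (simp_all add: mpow_0 mpow_Suc rmap_idm rmap_mmul)

lemma rmap_mlog: "rmap (mlog n X) = (mlog n (rmap X) :: 'k::field_char_0 sqm)"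
proof -
  have e: "rmap (\<lambda>a b. X a b - idm n a b) = (\<lambda>a b. rmap X a b - (idm n a b :: 'k))"
    using rmap_idm[of n] by (auto simp: fun_eq_iff rmap_def of_rat_diff dest: fun_cong)
  have "rmap (mlog n X) i j = (mlog n (rmap X) i j :: 'k)" for i j
  proof -
    have "rmap (mlog n X) i j = (\<Sum>k\<in>{1..n}. ((-1) ^ (k + 1) / of_nat k) * (rmap (mpow n (\<lambda>a b. X a b - idm n a b) k) i j :: 'k))"
      by (simp add: rmap_def mlog_def of_rat_sum of_rat_mult of_rat_divide of_rat_power of_rat_minus)
    also have "\<dots> = mlog n (rmap X) i j"
      unfolding rmap_mpow e by (simp add: mlog_def)
    finally show ?thesis .
  qed
  then show ?thesis by (auto simp: fun_eq_iff)
qed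

lemma rmap_of_int: "rmap (\<lambda>i j. of_int (g i j)) = (\<lambda>i j. of_int (g i j) :: 'k::field_char_0)"
  by (simp add: rmap_def)

lemma inj_rmap: "inj (rmap :: rat sqm \<Rightarrow> 'k::field_char_0 sqm)"
  by (auto simp: inj_def rmap_def fun_eq_iff)

lemma rmap_sum_msc: "rmap (\<Sum>a\<in>t. msc (r a) a) = (\<Sum>a\<in>t. msc (of_rat (r a)) (rmap a) :: 'k::field_char_0 sqm)"
  by (simp add: sum_msc_apply sum_msc_apply2 rmap_def of_rat_sum of_rat_mult)

lemma rmap_span: "y \<in> MV.span B \<Longrightarrow> (rmap y :: 'k::field_char_0 sqm) \<in> MV.span (rmap ` B)"
proof -
  assume "y \<in> MV.span B"
  then obtain t r where y: "y = (\<Sum>a\<in>t. msc (r a) a)" "finite t" "t \<subseteq> B"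
    unfolding MV.span_explicit by blast
  show ?thesis unfolding y rmap_sum_msc
    using y(3) by (intro MV.span_sum MV.span_scale MV.span_base) auto
qed


section \<open>Rational independence implies independence over K\<close>

lemma exists_Qfunctional:
  "\<exists>l::'k::field_char_0 \<Rightarrow> rat. (\<forall>x y. l (x+y) = l x + l y) \<and> (\<forall>q x. l (of_rat q * x) = q * l x) \<and> l 1 = 1"
proof -
  interpret V1: vector_space "\<lambda>q (x::'k). of_rat q * x"
    by unfold_locales (auto simp: algebra_simps of_rat_add of_rat_mult)
  interpret V2: vector_space "(*) :: rat \<Rightarrow> rat \<Rightarrow> rat"
    by unfold_locales (auto simp: algebra_simps)
  interpret P: vector_space_pair "\<lambda>q (x::'k). of_rat q * x" "(*) :: rat \<Rightarrow> rat \<Rightarrow> rat"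
    by unfold_locales
  have ind: "V1.independent {1}" by simp
  have lin: "Vector_Spaces.linear (\<lambda>q (x::'k). of_rat q * x) ((*) :: rat \<Rightarrow> rat \<Rightarrow> rat) (P.construct {1} (\<lambda>_. 1))"
    by (rule P.linear_construct[OF ind])
  have "P.construct {1} (\<lambda>_. 1) 1 = 1" by (rule P.construct_basis[OF ind]) simp
  then show ?thesis using lin unfolding Vector_Spaces.linear_iff by blast
qed

lemma rat_indep_K:
  fixes F :: "rat sqm set"
  assumes "lin_indep F"
  shows "lin_indep (rmap ` F :: 'k::field_char_0 sqm set)"
proof -
  obtain l :: "'k \<Rightarrow> rat" where ladd: "\<And>x y. l (x+y) = l x + l y"
    and lsc: "\<And>q x. l (of_rat q * x) = q * l x" and l1: "l 1 = 1"
    using exists_Qfunctional by blast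
  have l0: "l 0 = 0" using ladd[of 0 0] by simp
  have lsc': "l (x * of_rat q) = q * l x" for x q using lsc[of q x] by (simp add: mult.commute)
  have lsum: "l (sum g A) = (\<Sum>a\<in>A. l (g a))" for g :: "_ \<Rightarrow> 'k" and A
    by (induct A rule: infinite_finite_induct) (auto simp: l0 ladd)
  have fin: "finite F" using assms unfolding lin_indep_def by blast
  have inj: "inj_on rmap F" using inj_rmap by (metis inj_on_subset subset_UNIV)
  show ?thesis unfolding lin_indep_def
  proof (intro conjI allI impI)
    show "finite (rmap ` F :: 'k sqm set)" using fin by simp
    fix c :: "'k sqm \<Rightarrow> 'k"
    assume h: "\<forall>i j. (\<Sum>v\<in>rmap ` F. c v * v i j) = 0"
    have h2: "(\<Sum>u\<in>F. c (rmap u) * of_rat (u i j)) = 0" for i j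
      using h[rule_format, of i j] unfolding sum.reindex[OF inj] by (simp add: rmap_def)
    show "\<forall>v\<in>rmap ` F. c v = 0"
    proof (rule ccontr)
      assume "\<not> (\<forall>v\<in>rmap ` F. c v = 0)"
      then obtain u0 where u0: "u0 \<in> F" "c (rmap u0) \<noteq> 0" by auto
      define d where "d u = c (rmap u) / c (rmap u0)" for u
      have "(\<Sum>u\<in>F. d u * of_rat (u i j)) = (\<Sum>u\<in>F. c (rmap u) * of_rat (u i j)) / c (rmap u0)" for i j
        by (simp add: d_def sum_divide_distrib)
      then have dz: "(\<Sum>u\<in>F. d u * of_rat (u i j)) = 0" for i j
        using h2[of i j] by simp
      have "(\<Sum>u\<in>F. l (d u) * u i j) = 0" for i j
        using arg_cong[where f=l, OF dz[of i j]] by (simp add: lsum lsc' l0 mult.commute)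
      then have lz: "\<forall>i j. (\<Sum>u\<in>F. l (d u) * u i j) = 0" by blast
      have ind: "\<forall>c. (\<forall>i j. (\<Sum>v\<in>F. c v * v i j) = 0) \<longrightarrow> (\<forall>v\<in>F. c v = 0)"
        using assms unfolding lin_indep_def by blast
      have "\<forall>u\<in>F. l (d u) = 0" using ind[THEN spec, of "\<lambda>u. l (d u)"] lz by blast
      moreover have "d u0 = 1" using u0 by (simp add: d_def)
      ultimately show False using u0 l1 by auto
    qed
  qed
qed


section \<open>Continuity argument\<close>

lemma closure_in_span:
  fixes nv :: "'k::field_char_0 \<Rightarrow> real" and B :: "rat sqm set"
  assumes pf: "padic_field p nv" and pr: "prime p"
    and finB: "finite B" and indB: "MV.independent B"
    and Bspan: "\<And>g. g \<in> \<Gamma> \<Longrightarrow> mlog n (\<lambda>i j. of_int (g i j)) \<in> MV.span B"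
    and M: "M \<in> padic_closure n nv \<Gamma>"
  shows "mlog n M \<in> MV.span (rmap ` B :: 'k sqm set)"
proof (rule ccontr)
  define x where "x = mlog n M"
  assume "mlog n M \<notin> MV.span (rmap ` B :: 'k sqm set)"
  then have nx: "x \<notin> MV.span (rmap ` B)" by (simp add: x_def)
  have "lin_indep B" using lin_indep_iff[OF finB] indB by simp
  then have "lin_indep (rmap ` B :: 'k sqm set)" by (rule rat_indep_K)
  then have indB': "MV.independent (rmap ` B :: 'k sqm set)"
    using lin_indep_iff[of "rmap ` B :: 'k sqm set"] finB by simp
  have ind: "MV.independent (insert x (rmap ` B))" by (rule MV.independent_insertI[OF nx indB'])
  interpret V2: vector_space "(*) :: 'k \<Rightarrow> 'k \<Rightarrow> 'k"
    by unfold_locales (auto simp: algebra_simps)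
  interpret P: vector_space_pair "msc :: 'k \<Rightarrow> 'k sqm \<Rightarrow> 'k sqm" "(*) :: 'k \<Rightarrow> 'k \<Rightarrow> 'k"
    by unfold_locales
  define \<phi> where "\<phi> = P.construct (insert x (rmap ` B)) (\<lambda>v. if v = x then 1 else 0)"
  have lin: "Vector_Spaces.linear (msc :: 'k \<Rightarrow> 'k sqm \<Rightarrow> 'k sqm) (*) \<phi>"
    unfolding \<phi>_def by (rule P.linear_construct[OF ind])
  then have padd: "\<phi> (a + b) = \<phi> a + \<phi> b" and pscl: "\<phi> (msc c a) = c * \<phi> a" for a b c
    unfolding Vector_Spaces.linear_iff by blast+
  have p0: "\<phi> 0 = 0" using padd[of 0 0] by simp
  have psum: "\<phi> (sum g A) = (\<Sum>a\<in>A. \<phi> (g a))" for g :: "'k sqm \<Rightarrow> 'k sqm" and A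
    apply (induct A rule: infinite_finite_induct)
      apply (subst sum.infinite, assumption, subst sum.infinite, assumption, rule p0)
     apply (subst sum.empty, subst sum.empty, rule p0)
    apply (subst sum.insert, assumption, assumption, subst sum.insert, assumption, assumption, subst padd, simp)
    done
  have psum2: "\<phi> (sum g A) = (\<Sum>a\<in>A. \<phi> (g a))" for g :: "nat \<times> nat \<Rightarrow> 'k sqm" and A
    apply (induct A rule: infinite_finite_induct)
      apply (subst sum.infinite, assumption, subst sum.infinite, assumption, rule p0)
     apply (subst sum.empty, subst sum.empty, rule p0)
    apply (subst sum.insert, assumption, assumption, subst sum.insert, assumption, assumption, subst padd, simp)
    done
  have px: "\<phi> x = 1" unfolding \<phi>_def by (subst P.construct_basis[OF ind]) auto
  have pB: "\<phi> v = 0" if "v \<in> rmap ` B" for v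
  proof -
    have "v \<noteq> x" using nx that MV.span_base by blast
    then show ?thesis unfolding \<phi>_def using that by (subst P.construct_basis[OF ind]) auto
  qed
  have pspan: "\<phi> y = 0" if yin: "y \<in> MV.span (rmap ` B)" for y
  proof -
    obtain t r where y: "y = (\<Sum>a\<in>t. msc (r a) a)" "finite t" "t \<subseteq> rmap ` B"
      using yin unfolding MV.span_explicit by blast
    show ?thesis unfolding y psum pscl using y(3) pB by (auto intro!: sum.neutral)
  qed
  have pG: "\<phi> (mlog n (\<lambda>i j. of_int (g i j))) = 0" if "g \<in> \<Gamma>" for g
  proof -
    have "(mlog n (\<lambda>i j. of_int (g i j)) :: 'k sqm) = rmap (mlog n (\<lambda>i j. of_int (g i j)))"
      by (simp add: rmap_mlog rmap_of_int)
    also have "\<dots> \<in> MV.span (rmap ` B)" by (rule rmap_span[OF Bspan[OF that]])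
    finally show ?thesis by (rule pspan)
  qed
  define a where "a q = \<phi> (Em (fst q) (snd q))" for q
  have coord: "\<phi> X = (\<Sum>q\<in>{..<n}\<times>{..<n}. X (fst q) (snd q) * a q)"
    if "\<And>i j. \<not> (i < n \<and> j < n) \<Longrightarrow> X i j = 0" for X
  proof -
    have "X = (\<Sum>p\<in>{..<n}\<times>{..<n}. msc (X (fst p) (snd p)) (Em (fst p) (snd p)))"
      by (rule blk_expand) (use that in auto)
    then have "\<phi> X = \<phi> (\<Sum>p\<in>{..<n}\<times>{..<n}. msc (X (fst p) (snd p)) (Em (fst p) (snd p)))" by simp
    then show ?thesis by (simp only: psum2 pscl a_def)
  qed
  define cc :: "nat \<Rightarrow> 'k" where "cc k = (-1) ^ (k + 1) / of_nat k" for k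
  define Ca where "Ca = (\<Sum>q\<in>{..<n}\<times>{..<n}. nv (a q))"
  define Cc where "Cc = (\<Sum>k\<in>{1..n}. nv (cc k))"
  have nvge: "nv z \<ge> 0" for z using nv_basic(1)[OF pf] .
  have Ca0: "Ca \<ge> 0" unfolding Ca_def by (rule sum_nonneg) (rule nvge)
  have Cc0: "Cc \<ge> 0" unfolding Cc_def by (rule sum_nonneg) (rule nvge)
  have Mu: "unitri n M" and Mb: "\<And>i j. nv (M i j) \<le> 1"
    and Ma: "\<And>e. e > 0 \<Longrightarrow> \<exists>g\<in>\<Gamma>. \<forall>i<n. \<forall>j<n. nv (M i j - of_int (g i j)) < e"
    using M unfolding padic_closure_def by auto
  have bound: "nv (\<phi> x) \<le> Ca * Cc * e" if e: "e > 0" for e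
  proof -
    obtain g where g: "g \<in> \<Gamma>" and ga: "\<And>i j. i < n \<Longrightarrow> j < n \<Longrightarrow> nv (M i j - of_int (g i j)) < e"
      using Ma[OF e] by blast
    define G :: "'k sqm" where "G = (\<lambda>i j. of_int (g i j))"
    define A where "A = (\<lambda>i j. M i j - idm n i j)"
    define A' where "A' = (\<lambda>i j. G i j - idm n i j)"
    have Ab: "nv (A i j) \<le> 1" for i j
      unfolding A_def using nv_diff[OF pf, of "M i j" "idm n i j"] Mb[of i j] nv_idm[OF pf, of n i j] by simp
    have A'b: "nv (A' i j) \<le> 1" for i j
      unfolding A'_def G_def using nv_diff[OF pf, of "of_int (g i j)" "idm n i j"] nv_int[OF pf pr, of "g i j"] nv_idm[OF pf, of n i j] by simp
    have AA': "nv (A i j - A' i j) \<le> e" if "i < n" "j < n" for i j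
      using ga[OF that] unfolding A_def A'_def G_def by simp
    have pw: "nv (mpow n A k i j - mpow n A' k i j) \<le> e" for k i j
      by (rule mpow_close[OF pf]) (use Ab A'b AA' e in auto)
    have ld: "nv (mlog n M i j - mlog n G i j) \<le> Cc * e" for i j
    proof -
      have "mlog n M i j - mlog n G i j = (\<Sum>k\<in>{1..n}. cc k * (mpow n A k i j - mpow n A' k i j))"
        unfolding mlog_def A_def A'_def cc_def by (simp add: sum_subtractf[symmetric] algebra_simps)
      also have "nv \<dots> \<le> Cc * e"
      proof (rule nv_sum_le[OF pf])
        fix k assume k: "k \<in> {1..n}"
        have "nv (cc k) \<le> Cc" unfolding Cc_def using k by (intro member_le_sum) (auto intro: nvge)
        then show "nv (cc k * (mpow n A k i j - mpow n A' k i j)) \<le> Cc * e"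
          using mult_mono[OF _ pw[of k i j]] nv_basic(3)[OF pf] nvge Cc0 e by simp
      qed (use Cc0 e in simp)
      finally show ?thesis .
    qed
    have blkM: "\<not> (i < n \<and> j < n) \<Longrightarrow> mlog n M i j = 0" for i j by (rule mlog_blk)
    have blkG: "\<not> (i < n \<and> j < n) \<Longrightarrow> mlog n G i j = 0" for i j by (rule mlog_blk)
    have cM: "\<phi> (mlog n M) = (\<Sum>q\<in>{..<n}\<times>{..<n}. mlog n M (fst q) (snd q) * a q)"
      by (rule coord) (simp add: mlog_blk)
    have cG: "\<phi> (mlog n G) = (\<Sum>q\<in>{..<n}\<times>{..<n}. mlog n G (fst q) (snd q) * a q)"
      by (rule coord) (simp add: mlog_blk)
    have "\<phi> x = \<phi> x - \<phi> (mlog n G)" using pG[OF g] by (simp add: G_def)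
    also have "\<dots> = (\<Sum>q\<in>{..<n}\<times>{..<n}. (mlog n M (fst q) (snd q) - mlog n G (fst q) (snd q)) * a q)"
      unfolding x_def cM cG by (simp add: sum_subtractf[symmetric] algebra_simps)
    also have "nv \<dots> \<le> Ca * Cc * e"
    proof (rule nv_sum_le[OF pf])
      fix q assume q: "q \<in> {..<n}\<times>{..<n}"
      have "nv (a q) \<le> Ca" unfolding Ca_def using q by (intro member_le_sum) (auto intro: nvge)
      then show "nv ((mlog n M (fst q) (snd q) - mlog n G (fst q) (snd q)) * a q) \<le> Ca * Cc * e"
        using mult_mono[OF ld[of "fst q" "snd q"], of "nv (a q)" Ca] nv_basic(3)[OF pf] nvge Cc0 Ca0 e
        by (simp add: mult.commute mult.left_commute)
    qed (use Cc0 Ca0 e in simp)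
    finally show ?thesis .
  qed
  define e where "e = 1 / (2 * (Ca * Cc + 1))"
  have CC: "Ca * Cc \<ge> 0" using Ca0 Cc0 by simp
  have e0: "e > 0" unfolding e_def using CC by simp
  have "Ca * Cc * e < 1" unfolding e_def using CC by (simp add: field_simps)
  moreover have "nv (\<phi> x) = 1" using px nv_basic(5)[OF pf] by simp
  ultimately show False using bound[OF e0] by simp
qed


lemma span_over_mono: "S \<subseteq> T \<Longrightarrow> span_over R S \<subseteq> span_over R T"
  unfolding span_over_def by blast

lemma rmap_span_over:
  assumes "x \<in> span_over UNIV S"
  shows "(rmap x :: 'k::field_char_0 sqm) \<in> span_over (\<rat> :: 'k set) (rmap ` S)"
proof -
  obtain F c where x: "x = (\<lambda>i j. \<Sum>v\<in>F. c v * v i j)" "finite F" "F \<subseteq> S"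
    using assms unfolding span_over_def by blast
  have inj: "inj_on (rmap :: rat sqm \<Rightarrow> 'k sqm) F" using inj_rmap by (metis inj_on_subset subset_UNIV)
  define c' :: "'k sqm \<Rightarrow> 'k" where "c' w = of_rat (c (the_inv_into F rmap w))" for w :: "'k sqm"
  have eq: "c' (rmap v) = of_rat (c v)" if "v \<in> F" for v
    unfolding c'_def using the_inv_into_f_f[OF inj that] by simp
  have "(rmap x :: 'k sqm) = (\<lambda>i j. \<Sum>w\<in>rmap ` F. c' w * w i j)"
  proof (intro ext)
    fix i j
    have "(\<Sum>w\<in>rmap ` F. c' w * w i j) = (\<Sum>v\<in>F. c' (rmap v) * rmap v i j)"
      by (simp add: sum.reindex[OF inj])
    also have "\<dots> = (\<Sum>v\<in>F. of_rat (c v) * of_rat (v i j))"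
      by (rule sum.cong) (simp_all add: eq, simp add: rmap_def)
    also have "\<dots> = rmap x i j" by (simp add: x(1) rmap_def of_rat_sum of_rat_mult)
    finally show "rmap x i j = (\<Sum>w\<in>rmap ` F. c' w * w i j)" by simp
  qed
  moreover have "\<forall>w\<in>rmap ` F. c' w \<in> \<rat>" unfolding c'_def by auto
  ultimately show ?thesis unfolding span_over_def using x by blast
qed

lemma Gamma_in_closure:
  assumes pf: "padic_field p nv" and pr: "prime p" and sg: "subgroup_Tr1Z n \<Gamma>" and g: "g \<in> \<Gamma>"
  shows "(\<lambda>i j. of_int (g i j) :: 'k::field_char_0) \<in> padic_closure n nv \<Gamma>"
proof -
  have u: "unitri n g" using sg g unfolding subgroup_Tr1Z_def by auto
  have "unitri n (\<lambda>i j. of_int (g i j) :: 'k)"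
    using u unfolding unitri_def by auto
  moreover have "\<forall>i j. nv (of_int (g i j) :: 'k) \<le> 1" using nv_int[OF pf pr] by blast
  moreover have "\<forall>e>0. \<exists>g'\<in>\<Gamma>. \<forall>i<n. \<forall>j<n. nv ((of_int (g i j) :: 'k) - of_int (g' i j)) < e"
    using g nv_basic(2)[OF pf] by (intro allI impI bexI[of _ g]) auto
  ultimately show ?thesis unfolding padic_closure_def by blast
qed

theorem corollary2p14:
  fixes n p :: nat and \<Gamma> :: "int sqm set" and nv :: "'k::field_char_0 \<Rightarrow> real"
  assumes "subgroup_Tr1Z n \<Gamma>"
    and "fin_gen_Tr1Z n \<Gamma>"
    and "torsion_free_Tr1Z n \<Gamma>"
    and "nilpotent_Tr1Z n \<Gamma>"
    and "prime p"
    and "padic_field p nv"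
  shows "mdim (span_over (UNIV :: rat set) ((\<lambda>g. mlog n (\<lambda>i j. of_int (g i j))) ` \<Gamma>))
       = mdim (span_over (\<rat> :: 'k set) (mlog n ` padic_closure n nv \<Gamma>))"
proof -
  note sg = assms(1) and pr = assms(5) and pf = assms(6)
  define LG :: "rat sqm set" where "LG = (\<lambda>g. mlog n (\<lambda>i j. of_int (g i j))) ` \<Gamma>"
  define LP :: "'k sqm set" where "LP = mlog n ` padic_closure n nv \<Gamma>"
  have LGP: "rmap ` LG \<subseteq> LP"
  proof
    fix y :: "'k sqm" assume "y \<in> rmap ` LG"
    then obtain g where g: "g \<in> \<Gamma>" and y: "y = rmap (mlog n (\<lambda>i j. of_int (g i j)))"
      unfolding LG_def by auto
    have "y = mlog n (\<lambda>i j. of_int (g i j))" unfolding y by (simp add: rmap_mlog rmap_of_int)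
    then show "y \<in> LP" unfolding LP_def using Gamma_in_closure[OF pf pr sg g] by blast
  qed
  have "{card F |F. F \<subseteq> span_over UNIV LG \<and> lin_indep F}
      = {card F |F. F \<subseteq> span_over \<rat> LP \<and> lin_indep F}"
  proof (intro equalityI subsetI)
    fix m assume "m \<in> {card F |F. F \<subseteq> span_over UNIV LG \<and> lin_indep F}"
    then obtain F where F: "m = card F" "F \<subseteq> span_over UNIV LG" "lin_indep F" by blast
    have "rmap ` F \<subseteq> span_over \<rat> LP"
    proof
      fix y assume "y \<in> (rmap ` F :: 'k sqm set)"
      then obtain x where x: "x \<in> F" "y = rmap x" by blast
      have "y \<in> span_over \<rat> (rmap ` LG)" using rmap_span_over F(2) x by blast
      then show "y \<in> span_over \<rat> LP" using span_over_mono[OF LGP] by blast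
    qed
    moreover have "lin_indep (rmap ` F :: 'k sqm set)" by (rule rat_indep_K[OF F(3)])
    moreover have "card (rmap ` F :: 'k sqm set) = m"
      using F(1) inj_rmap by (metis card_image inj_on_subset subset_UNIV)
    ultimately show "m \<in> {card F |F. F \<subseteq> span_over \<rat> LP \<and> lin_indep F}" by blast
  next
    fix m assume "m \<in> {card F |F. F \<subseteq> span_over \<rat> LP \<and> lin_indep F}"
    then obtain F where F: "m = card F" "F \<subseteq> span_over \<rat> LP" "lin_indep F" by blast
    obtain B where B: "B \<subseteq> LG" "MV.independent B" "LG \<subseteq> MV.span B"
      using MV.maximal_independent_subset[of LG] by blast
    define E :: "rat sqm set" where "E = (\<lambda>p. Em (fst p) (snd p)) ` ({..<n}\<times>{..<n})"
    have "B \<subseteq> MV.span E"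
    proof
      fix b assume "b \<in> B"
      then obtain g where "b = mlog n (\<lambda>i j. of_int (g i j))" using B(1) unfolding LG_def by blast
      then show "b \<in> MV.span E" unfolding E_def by (intro blk_in_span) (simp add: mlog_blk)
    qed
    then have finB: "finite B" using MV.independent_span_bound[of E B] B(2) unfolding E_def by auto
    have "LP \<subseteq> MV.span (rmap ` B)"
    proof
      fix y assume "y \<in> LP"
      then obtain M where M: "M \<in> padic_closure n nv \<Gamma>" "y = mlog n M" unfolding LP_def by blast
      have "mlog n M \<in> MV.span (rmap ` B :: 'k sqm set)"
      proof (rule closure_in_span[OF pf pr finB B(2) _ M(1)])
        fix g assume "g \<in> \<Gamma>"
        then show "mlog n (\<lambda>i j. of_int (g i j)) \<in> MV.span B" using B(3) unfolding LG_def by blast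
      qed
      then show "y \<in> MV.span (rmap ` B)" using M(2) by simp
    qed
    then have "MV.span LP \<subseteq> MV.span (rmap ` B)"
      using MV.span_minimal[OF _ MV.subspace_span] by blast
    then have FB: "F \<subseteq> MV.span (rmap ` B)" using F(2) span_over_sub by blast
    have finF: "finite F" using F(3) unfolding lin_indep_def by blast
    have "MV.independent F" using lin_indep_iff[OF finF] F(3) by simp
    then have "card F \<le> card (rmap ` B :: 'k sqm set)"
      using MV.independent_span_bound[OF _ _ FB] finB by auto
    also have "\<dots> \<le> card B" by (rule card_image_le[OF finB])
    finally have mB: "m \<le> card B" using F(1) by simp
    obtain G where G: "G \<subseteq> B" "card G = m" using obtain_subset_with_card_n[OF mB] by blast
    have finG: "finite G" using G(1) finB finite_subset by blast
    have "MV.independent G" using MV.independent_mono[OF B(2) G(1)] .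
    then have "lin_indep G" using lin_indep_iff[OF finG] by simp
    moreover have "G \<subseteq> span_over UNIV LG"
      using G(1) B(1) MV.span_superset[of LG] unfolding span_over_UNIV by blast
    ultimately show "m \<in> {card F |F. F \<subseteq> span_over UNIV LG \<and> lin_indep F}" using G(2) by blast
  qed
  then show ?thesis unfolding mdim_def LG_def LP_def by simp
qed

end
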